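(* Let $\Gamma$ be a finitely generated infinite simple group, $S$ a finite generating set of $\Gamma$ (not containing the identity), and suppose $G=\mathrm{Cay}(\Gamma,S)$ is a graphical regular representation of $\Gamma$. Then every periodic vertex-coloring of $G$ is trivial. Moreover, if $S$ contains an element of order $2$, then $G$ does not have a periodic orientation.
   Context: The Cayley graph $\mathrm{Cay}(\Gamma,S)$ has vertex set $\Gamma$, with $g,h$ adjacent iff $hg^{-1}\in S\cup S^{-1}$; $\Gamma$ acts on it by right multiplication $h\mapsto hg$. It is a graphical regular representation of $\Gamma$ if these right multiplications are all of its automorphisms, i.e. $\mathrm{Aut}(G)=\Gamma$. A vertex-coloring is trivial if within each connected component all vertices get the same color. A vertex-coloring (resp. orientation) of $G$ is periodic if the subgroup of automorphisms of $G$ preserving the colors of vertices (resp. the orientation of every edge) has finitely many orbits on $V(G)$. *)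

theory Defs
  imports "HOL-Algebra.Algebra" "HOL-Library.FuncSet"
begin

text \<open>Simplicity for possibly infinite groups (the library locale simple_group
  requires order G > 1, which fails for infinite groups since order = card).\<close>
definition simple_grp :: "('a, 'b) monoid_scheme \<Rightarrow> bool" where
  "simple_grp G \<longleftrightarrow> group G \<and> carrier G \<noteq> {\<one>\<^bsub>G\<^esub>} \<and>
     (\<forall>H. H \<lhd> G \<longrightarrow> H = {\<one>\<^bsub>G\<^esub>} \<or> H = carrier G)"

definition cay_adj :: "('a, 'b) monoid_scheme \<Rightarrow> 'a set \<Rightarrow> 'a \<Rightarrow> 'a \<Rightarrow> bool" where
  "cay_adj G S g h \<longleftrightarrow> g \<in> carrier G \<and> h \<in> carrier G \<and>
     (h \<otimes>\<^bsub>G\<^esub> inv\<^bsub>G\<^esub> g \<in> S \<or> h \<otimes>\<^bsub>G\<^esub> inv\<^bsub>G\<^esub> g \<in> (\<lambda>s. inv\<^bsub>G\<^esub> s) ` S)"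

definition cay_auts :: "('a, 'b) monoid_scheme \<Rightarrow> 'a set \<Rightarrow> ('a \<Rightarrow> 'a) set" where
  "cay_auts G S = {\<phi> \<in> extensional (carrier G).
     bij_betw \<phi> (carrier G) (carrier G) \<and>
     (\<forall>g\<in>carrier G. \<forall>h\<in>carrier G. cay_adj G S g h \<longleftrightarrow> cay_adj G S (\<phi> g) (\<phi> h))}"

definition right_mults :: "('a, 'b) monoid_scheme \<Rightarrow> ('a \<Rightarrow> 'a) set" where
  "right_mults G = {restrict (\<lambda>h. h \<otimes>\<^bsub>G\<^esub> g) (carrier G) | g. g \<in> carrier G}"

definition is_GRR :: "('a, 'b) monoid_scheme \<Rightarrow> 'a set \<Rightarrow> bool" where
  "is_GRR G S \<longleftrightarrow> cay_auts G S = right_mults G"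

definition orbit_of :: "('a \<Rightarrow> 'a) set \<Rightarrow> 'a \<Rightarrow> 'a set" where
  "orbit_of A v = {\<phi> v | \<phi>. \<phi> \<in> A}"

definition finitely_many_orbits :: "('a \<Rightarrow> 'a) set \<Rightarrow> 'a set \<Rightarrow> bool" where
  "finitely_many_orbits A V \<longleftrightarrow> finite {orbit_of A v | v. v \<in> V}"

definition color_preserving_auts ::
  "('a, 'b) monoid_scheme \<Rightarrow> 'a set \<Rightarrow> ('a \<Rightarrow> 'c) \<Rightarrow> ('a \<Rightarrow> 'a) set" where
  "color_preserving_auts G S c = {\<phi> \<in> cay_auts G S. \<forall>v\<in>carrier G. c (\<phi> v) = c v}"

definition periodic_coloring :: "('a, 'b) monoid_scheme \<Rightarrow> 'a set \<Rightarrow> ('a \<Rightarrow> 'c) \<Rightarrow> bool" where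
  "periodic_coloring G S c \<longleftrightarrow> finitely_many_orbits (color_preserving_auts G S c) (carrier G)"

definition trivial_coloring :: "('a, 'b) monoid_scheme \<Rightarrow> 'a set \<Rightarrow> ('a \<Rightarrow> 'c) \<Rightarrow> bool" where
  "trivial_coloring G S c \<longleftrightarrow>
     (\<forall>u\<in>carrier G. \<forall>v\<in>carrier G. (cay_adj G S)\<^sup>*\<^sup>* u v \<longrightarrow> c u = c v)"

text \<open>An orientation: D u v means the edge {u,v} is directed from u to v;
  every edge gets exactly one direction, and D lives on edges only.\<close>
definition is_orientation :: "('a, 'b) monoid_scheme \<Rightarrow> 'a set \<Rightarrow> ('a \<Rightarrow> 'a \<Rightarrow> bool) \<Rightarrow> bool" where
  "is_orientation G S D \<longleftrightarrow> (\<forall>u v. D u v \<longrightarrow> cay_adj G S u v) \<and>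
     (\<forall>u v. cay_adj G S u v \<longrightarrow> (D u v \<longleftrightarrow> \<not> D v u))"

definition orientation_preserving_auts ::
  "('a, 'b) monoid_scheme \<Rightarrow> 'a set \<Rightarrow> ('a \<Rightarrow> 'a \<Rightarrow> bool) \<Rightarrow> ('a \<Rightarrow> 'a) set" where
  "orientation_preserving_auts G S D =
     {\<phi> \<in> cay_auts G S. \<forall>u v. D u v \<longrightarrow> D (\<phi> u) (\<phi> v)}"

definition periodic_orientation :: "('a, 'b) monoid_scheme \<Rightarrow> 'a set \<Rightarrow> ('a \<Rightarrow> 'a \<Rightarrow> bool) \<Rightarrow> bool" where
  "periodic_orientation G S D \<longleftrightarrow> is_orientation G S D \<and>
     finitely_many_orbits (orientation_preserving_auts G S D) (carrier G)"

end

theory Submission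
  imports Defs
begin

lemma (in group) key_fin_index:
  assumes simp: "simple_grp G" and inf: "infinite (carrier G)"
    and Hc: "H \<subseteq> carrier G" and H1: "\<one> \<in> H"
    and fin: "finite {v <# H | v. v \<in> carrier G}"
  shows "H = carrier G"
proof -
  define N where "N = {g \<in> carrier G. \<forall>v\<in>carrier G. (g \<otimes> v) <# H = v <# H}"
  have NC: "N \<subseteq> carrier G" unfolding N_def by auto
  have sub: "subgroup N G"
  proof (rule subgroupI)
    show "N \<subseteq> carrier G" by (rule NC)
    show "N \<noteq> {}" using H1 unfolding N_def by (auto intro!: exI[of _ \<one>])
  next
    fix a assume a: "a \<in> N"
    hence ac: "a \<in> carrier G" using NC by auto
    have "(inv a \<otimes> v) <# H = v <# H" if v: "v \<in> carrier G" for v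
    proof -
      have "v <# H = (a \<otimes> (inv a \<otimes> v)) <# H" using ac v by (simp add: m_assoc[symmetric])
      also have "\<dots> = (inv a \<otimes> v) <# H" using a v ac unfolding N_def by auto
      finally show ?thesis by simp
    qed
    thus "inv a \<in> N" using ac unfolding N_def by auto
  next
    fix a b assume a: "a \<in> N" and b: "b \<in> N"
    hence ac: "a \<in> carrier G" and bc: "b \<in> carrier G" using NC by auto
    have "(a \<otimes> b \<otimes> v) <# H = v <# H" if v: "v \<in> carrier G" for v
    proof -
      have "(a \<otimes> b \<otimes> v) <# H = (a \<otimes> (b \<otimes> v)) <# H" using ac bc v by (simp add: m_assoc)
      also have "\<dots> = (b \<otimes> v) <# H" using a v bc unfolding N_def by auto
      also have "\<dots> = v <# H" using b v unfolding N_def by auto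
      finally show ?thesis .
    qed
    thus "a \<otimes> b \<in> N" using ac bc unfolding N_def by auto
  qed
  have norm: "N \<lhd> G"
    unfolding normal_inv_iff
  proof (intro conjI sub ballI)
    fix x h assume x: "x \<in> carrier G" and h: "h \<in> N"
    hence hc: "h \<in> carrier G" using NC by auto
    have "(x \<otimes> h \<otimes> inv x \<otimes> v) <# H = v <# H" if v: "v \<in> carrier G" for v
    proof -
      have "(x \<otimes> h \<otimes> inv x \<otimes> v) <# H = x <# ((h \<otimes> (inv x \<otimes> v)) <# H)"
        using x hc v Hc by (simp add: lcos_m_assoc m_assoc)
      also have "\<dots> = x <# ((inv x \<otimes> v) <# H)" using h x v unfolding N_def by auto
      also have "\<dots> = v <# H" using x v Hc by (simp add: lcos_m_assoc m_assoc[symmetric])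
      finally show ?thesis .
    qed
    thus "x \<otimes> h \<otimes> inv x \<in> N" using x hc unfolding N_def by auto
  qed
  from simp norm have "N = {\<one>} \<or> N = carrier G" unfolding simple_grp_def by auto
  moreover
  {
    assume N1: "N = {\<one>}"
    define Os where "Os = {v <# H | v. v \<in> carrier G}"
    define F where "F = (\<lambda>g. restrict (l_coset G g) Os)"
    have "inj_on F (carrier G)"
    proof (rule inj_onI)
      fix g h assume g: "g \<in> carrier G" and h: "h \<in> carrier G" and e: "F g = F h"
      have "(inv h \<otimes> g \<otimes> v) <# H = v <# H" if v: "v \<in> carrier G" for v
      proof -
        have "v <# H \<in> Os" using v unfolding Os_def by auto
        hence "g <# (v <# H) = h <# (v <# H)" using e unfolding F_def by (metis restrict_apply')
        hence "(g \<otimes> v) <# H = (h \<otimes> v) <# H" using g h v Hc by (simp add: lcos_m_assoc)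
        hence "inv h <# ((g \<otimes> v) <# H) = inv h <# ((h \<otimes> v) <# H)" by simp
        thus ?thesis using g h v Hc by (simp add: lcos_m_assoc m_assoc[symmetric])
      qed
      hence "inv h \<otimes> g \<in> N" using g h unfolding N_def by auto
      hence "inv h \<otimes> g = \<one>" using N1 by auto
      thus "g = h" using g h by (metis inv_equality inv_inv inv_closed)
    qed
    moreover have "F ` carrier G \<subseteq> PiE Os (\<lambda>_. Os)"
    proof
      fix f assume "f \<in> F ` carrier G"
      then obtain g where g: "g \<in> carrier G" and f: "f = F g" by auto
      have "g <# Y \<in> Os" if "Y \<in> Os" for Y
      proof -
        from that obtain v where v: "v \<in> carrier G" "Y = v <# H" unfolding Os_def by auto
        thus ?thesis using g Hc unfolding Os_def by (auto simp: lcos_m_assoc)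
      qed
      thus "f \<in> PiE Os (\<lambda>_. Os)" unfolding f F_def by auto
    qed
    moreover have "finite (PiE Os (\<lambda>_. Os))" using fin unfolding Os_def by (simp add: finite_PiE)
    ultimately have "finite (carrier G)" by (meson finite_imageD finite_subset)
    with inf have False by simp
  }
  ultimately have NG: "N = carrier G" by blast
  show ?thesis
  proof
    show "carrier G \<subseteq> H"
    proof
      fix g assume g: "g \<in> carrier G"
      have "g \<in> N" using NG g by simp
      hence "(g \<otimes> \<one>) <# H = \<one> <# H" unfolding N_def by blast
      hence "g <# H = H" using g Hc by (simp add: lcos_mult_one)
      thus "g \<in> H" using H1 g unfolding l_coset_def by (metis r_one UN_iff singletonI)
    qed
  qed (rule Hc)
qed


lemma orbits_eq:
  assumes "group G" and Hc: "H \<subseteq> carrier G"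
    and A: "A = {restrict (\<lambda>h. h \<otimes>\<^bsub>G\<^esub> g) (carrier G) | g. g \<in> H}"
  shows "{orbit_of A v | v. v \<in> carrier G} = {v <#\<^bsub>G\<^esub> H | v. v \<in> carrier G}"
proof -
  have "orbit_of A v = v <#\<^bsub>G\<^esub> H" if v: "v \<in> carrier G" for v
  proof
    show "orbit_of A v \<subseteq> v <#\<^bsub>G\<^esub> H" using v Hc unfolding orbit_of_def A l_coset_def by auto
    show "v <#\<^bsub>G\<^esub> H \<subseteq> orbit_of A v"
    proof
      fix x assume "x \<in> v <#\<^bsub>G\<^esub> H"
      then obtain h where h: "h \<in> H" "x = v \<otimes>\<^bsub>G\<^esub> h" unfolding l_coset_def by auto
      thus "x \<in> orbit_of A v" using v unfolding orbit_of_def A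
        by (intro CollectI exI[of _ "restrict (\<lambda>y. y \<otimes>\<^bsub>G\<^esub> h) (carrier G)"]) auto
    qed
  qed
  thus ?thesis by auto
qed

lemma restrict_app: "v \<in> carrier G \<Longrightarrow> restrict (\<lambda>h. h \<otimes>\<^bsub>G\<^esub> g) (carrier G) v = v \<otimes>\<^bsub>G\<^esub> g"
  by simp

lemma (in group) main_aux:
  assumes "simple_grp G" and "infinite (carrier G)"
    and "S \<subseteq> carrier G"
    and "is_GRR G S"
  shows "(\<forall>c :: 'a \<Rightarrow> 'c. periodic_coloring G S c \<longrightarrow> trivial_coloring G S c) \<and>
         ((\<exists>s\<in>S. ord s = 2) \<longrightarrow> (\<nexists>D. periodic_orientation G S D))"
proof -
  have aut: "cay_auts G S = right_mults G" using assms(4) unfolding is_GRR_def .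
  have part1: "trivial_coloring G S c" if pc: "periodic_coloring G S c" for c :: "'a \<Rightarrow> 'c"
  proof -
    define H where "H = {g \<in> carrier G. \<forall>v\<in>carrier G. c (v \<otimes> g) = c v}"
    have Hc: "H \<subseteq> carrier G" unfolding H_def by auto
    have H1: "\<one> \<in> H" unfolding H_def by auto
    have A: "color_preserving_auts G S c = {restrict (\<lambda>h. h \<otimes> g) (carrier G) | g. g \<in> H}"
    proof (intro equalityI subsetI)
      fix \<phi> assume "\<phi> \<in> color_preserving_auts G S c"
      then obtain g where g: "g \<in> carrier G" "\<phi> = restrict (\<lambda>h. h \<otimes> g) (carrier G)"
        and P: "\<forall>v\<in>carrier G. c (\<phi> v) = c v"
        unfolding color_preserving_auts_def aut right_mults_def by blast
      hence "g \<in> H" unfolding H_def by simp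
      thus "\<phi> \<in> {restrict (\<lambda>h. h \<otimes> g) (carrier G) | g. g \<in> H}" using g by blast
    next
      fix \<phi> assume "\<phi> \<in> {restrict (\<lambda>h. h \<otimes> g) (carrier G) | g. g \<in> H}"
      then obtain g where g: "g \<in> H" "\<phi> = restrict (\<lambda>h. h \<otimes> g) (carrier G)" by blast
      hence "g \<in> carrier G" "\<forall>v\<in>carrier G. c (\<phi> v) = c v" unfolding H_def by auto
      thus "\<phi> \<in> color_preserving_auts G S c"
        unfolding color_preserving_auts_def aut right_mults_def using g(2) by blast
    qed
    have "finite {v <# H | v. v \<in> carrier G}"
      using pc orbits_eq[OF is_group Hc A] unfolding periodic_coloring_def finitely_many_orbits_def
      by simp
    hence HG: "H = carrier G" using key_fin_index[OF assms(1,2) Hc H1] by simp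
    have cg: "c g = c \<one>" if g: "g \<in> carrier G" for g
    proof -
      have "g \<in> H" using g HG by simp
      hence "\<forall>v\<in>carrier G. c (v \<otimes> g) = c v" unfolding H_def by simp
      thus ?thesis using g by (metis l_one one_closed)
    qed
    show ?thesis unfolding trivial_coloring_def
    proof (intro ballI impI)
      fix u v assume u: "u \<in> carrier G" and v: "v \<in> carrier G"
      show "c u = c v" using cg[OF u] cg[OF v] by (rule trans[OF _ sym])
    qed
  qed
  have part2: False if s: "s \<in> S" "ord s = 2" and pD: "periodic_orientation G S D" for s D
  proof -
    have sc: "s \<in> carrier G" using s assms(3) by auto
    have ss: "s \<otimes> s = \<one>" using pow_ord_eq_1[OF sc] s(2) sc by (simp add: numeral_2_eq_2)
    have orD: "is_orientation G S D" using pD unfolding periodic_orientation_def by simp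
    define H where "H = {g \<in> carrier G. \<forall>u v. D u v \<longrightarrow>
        D (restrict (\<lambda>h. h \<otimes> g) (carrier G) u) (restrict (\<lambda>h. h \<otimes> g) (carrier G) v)}"
    have Hc: "H \<subseteq> carrier G" unfolding H_def by auto
    have H1: "\<one> \<in> H"
    proof -
      have "D (restrict (\<lambda>h. h \<otimes> \<one>) (carrier G) u) (restrict (\<lambda>h. h \<otimes> \<one>) (carrier G) v)"
        if "D u v" for u v
      proof -
        have "cay_adj G S u v" using orD that unfolding is_orientation_def by blast
        hence "u \<in> carrier G" "v \<in> carrier G" unfolding cay_adj_def by auto
        thus ?thesis using that by simp
      qed
      thus ?thesis unfolding H_def by auto
    qed
    have A: "orientation_preserving_auts G S D = {restrict (\<lambda>h. h \<otimes> g) (carrier G) | g. g \<in> H}"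
    proof (intro equalityI subsetI)
      fix \<phi> assume "\<phi> \<in> orientation_preserving_auts G S D"
      then obtain g where g: "g \<in> carrier G" "\<phi> = restrict (\<lambda>h. h \<otimes> g) (carrier G)"
        and P: "\<forall>u v. D u v \<longrightarrow> D (\<phi> u) (\<phi> v)"
        unfolding orientation_preserving_auts_def aut right_mults_def by blast
      hence "g \<in> H" unfolding H_def by simp
      thus "\<phi> \<in> {restrict (\<lambda>h. h \<otimes> g) (carrier G) | g. g \<in> H}" using g by blast
    next
      fix \<phi> assume "\<phi> \<in> {restrict (\<lambda>h. h \<otimes> g) (carrier G) | g. g \<in> H}"
      then obtain g where g: "g \<in> H" "\<phi> = restrict (\<lambda>h. h \<otimes> g) (carrier G)" by blast
      hence "g \<in> carrier G" "\<forall>u v. D u v \<longrightarrow> D (\<phi> u) (\<phi> v)" unfolding H_def by auto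
      thus "\<phi> \<in> orientation_preserving_auts G S D"
        unfolding orientation_preserving_auts_def aut right_mults_def using g(2) by blast
    qed
    have "finite {v <# H | v. v \<in> carrier G}"
      using pD orbits_eq[OF is_group Hc A] unfolding periodic_orientation_def finitely_many_orbits_def
      by simp
    hence HG: "H = carrier G" using key_fin_index[OF assms(1,2) Hc H1] by simp
    hence sH: "s \<in> H" using sc by simp
    have adj: "cay_adj G S \<one> s" unfolding cay_adj_def using sc s(1) by simp
    have iff: "D \<one> s \<longleftrightarrow> \<not> D s \<one>" using orD adj unfolding is_orientation_def by blast
    have sH': "\<forall>u v. D u v \<longrightarrow> D (restrict (\<lambda>h. h \<otimes> s) (carrier G) u) (restrict (\<lambda>h. h \<otimes> s) (carrier G) v)"
      using sH unfolding H_def by blast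
    have t: "D (\<one> \<otimes> s) (s \<otimes> s)" if "D \<one> s"
      using sH'[rule_format, OF that] sc by simp
    have t2: "D (s \<otimes> s) (\<one> \<otimes> s)" if "D s \<one>"
      using sH'[rule_format, OF that] sc by simp
    show False using iff t t2 ss sc by auto
  qed
  show ?thesis using part1 part2 by blast
qed


theorem lemma3p2:
  fixes G :: "('a, 'b) monoid_scheme" and S :: "'a set"
  assumes "group G" and "simple_grp G" and "infinite (carrier G)"
    and "finite S" and "S \<subseteq> carrier G" and "\<one>\<^bsub>G\<^esub> \<notin> S"
    and "generate G S = carrier G"
    and "is_GRR G S"
  shows "(\<forall>c :: 'a \<Rightarrow> 'c. periodic_coloring G S c \<longrightarrow> trivial_coloring G S c) \<and>
         ((\<exists>s\<in>S. group.ord G s = 2) \<longrightarrow> (\<nexists>D. periodic_orientation G S D))"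
  using group.main_aux[OF assms(1,2,3,5,8)] by blast

end
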